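(* Let $\mathbb{C}=(\mathbf{C},0,\mathbf{D},\mathcal{R})$ be a reactive system with redex RPOs, and let $L$ be an IPO-closed class of arrows (contexts) of $\mathbf{C}$. Then $L$-bisimilarity $\sim^{L}$ is a congruence: for all terms $P,Q:0\to I$ and every arrow $C[-]:I\to J$ of $\mathbf{C}$, if $P\sim^{L}Q$ then $C[P]\sim^{L}C[Q]$.
   Context: A reactive system consists of a category $\mathbf{C}$, a distinguished object $0$, a composition-reflecting subcategory $\mathbf{D}$ of reactive contexts (i.e. $d'\circ d\in\mathbf{D}$ implies $d,d'\in\mathbf{D}$), and a set $\mathcal{R}\subseteq\bigcup_{I}\mathbf{C}(0,I)\times\mathbf{C}(0,I)$ of reduction rules. Terms are arrows with domain $0$; for an arrow $C[-]$ we write $C[P]$ for $C[-]\circ P$. The reduction relation is $P\rightsquigarrow Q$ iff $P=d\circ l$ and $Q=d\circ r$ for some $\langle l,r\rangle\in\mathcal{R}$ and $d\in\mathbf{D}$. Given a commuting square $c_1\circ a_1=c_2\circ a_2$ (with $a_1:K\to I_2$, $a_2:K\to I_3$, $c_1:I_2\to I_4$, $c_2:I_3\to I_4$), a candidate is a tuple $\langle I_5,e,f,g\rangle$ with $e:I_2\to I_5$, $f:I_3\to I_5$, $g:I_5\to I_4$, $e\circ a_1=f\circ a_2$, $g\circ e=c_1$, $g\circ f=c_2$. An RPO is a candidate $\langle I_5,e,f,g\rangle$ such that for every candidate $\langle I_6,e',f',g'\rangle$ there is a unique $h:I_5\to I_6$ with $h\circ e=e'$, $h\circ f=f'$, $g'\circ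 h=g$. The square is an IPO if $\langle I_4,c_1,c_2,\mathrm{id}_{I_4}\rangle$ is an RPO for it. A redex square is a commuting square $C[-]\circ P=d\circ l$ with $P$ a term, $\langle l,r\rangle\in\mathcal{R}$, $d\in\mathbf{D}$; the reactive system has redex RPOs if every redex square has an RPO. The IPO transition system has transitions $P\xrightarrow{C[-]}_I d\circ r$ whenever $d\in\mathbf{D}$, $\langle l,r\rangle\in\mathcal{R}$ and the square $C[-]\circ P=d\circ l$ is an IPO. For a class $L$ of arrows, a symmetric relation $\mathcal{R}'$ on terms is an $L$-bisimulation if whenever $P\,\mathcal{R}'\,Q$ and $P\xrightarrow{C[-]}_I P'$: if $C[-]\in L$ then $Q\xrightarrow{C[-]}_I Q'$ for some $Q'$ with $P'\,\mathcal{R}'\,Q'$; otherwise $C[Q]\rightsquigarrow Q'$ for some $Q'$ with $P'\,\mathcal{R}'\,Q'$. $L$-bisimilarity $\sim^L$ is the largest $L$-bisimulation. $L$ is IPO-closed if whenever a commuting square $b\circ a=d\circ c$ (with $a,c$ having a common domain, $b,d$ a common codomain) is an IPO and $b\in L$, then $c\in L$. *)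

theory Defs
  imports Main
begin

text \<open>A category presented by: a set of arrows Arr (objects are the elements of
  type 'o), domain and codomain maps, composition cmp g f (meaning g after f,
  only meaningful when cd f = dm g) and identities idt.\<close>

definition category ::
  "'a set \<Rightarrow> ('a \<Rightarrow> 'o) \<Rightarrow> ('a \<Rightarrow> 'o) \<Rightarrow> ('a \<Rightarrow> 'a \<Rightarrow> 'a) \<Rightarrow> ('o \<Rightarrow> 'a) \<Rightarrow> bool" where
  "category Arr dm cd cmp idt \<longleftrightarrow>
     (\<forall>x. idt x \<in> Arr \<and> dm (idt x) = x \<and> cd (idt x) = x) \<and>
     (\<forall>f\<in>Arr. \<forall>g\<in>Arr. cd f = dm g \<longrightarrow>
        cmp g f \<in> Arr \<and> dm (cmp g f) = dm f \<and> cd (cmp g f) = cd g) \<and>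
     (\<forall>f\<in>Arr. cmp f (idt (dm f)) = f \<and> cmp (idt (cd f)) f = f) \<and>
     (\<forall>f\<in>Arr. \<forall>g\<in>Arr. \<forall>h\<in>Arr. cd f = dm g \<longrightarrow> cd g = dm h \<longrightarrow>
        cmp h (cmp g f) = cmp (cmp h g) f)"

definition reactive_system ::
  "'a set \<Rightarrow> ('a \<Rightarrow> 'o) \<Rightarrow> ('a \<Rightarrow> 'o) \<Rightarrow> ('a \<Rightarrow> 'a \<Rightarrow> 'a) \<Rightarrow> ('o \<Rightarrow> 'a) \<Rightarrow>
   'o \<Rightarrow> 'a set \<Rightarrow> ('a \<times> 'a) set \<Rightarrow> bool" where
  "reactive_system Arr dm cd cmp idt zero D R \<longleftrightarrow>
     category Arr dm cd cmp idt \<and>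
     D \<subseteq> Arr \<and>
     (\<forall>d\<in>D. \<forall>d'\<in>D. cd d = dm d' \<longrightarrow> cmp d' d \<in> D) \<and>
     (\<forall>d\<in>Arr. \<forall>d'\<in>Arr. cd d = dm d' \<longrightarrow> cmp d' d \<in> D \<longrightarrow> d \<in> D \<and> d' \<in> D) \<and>
     (\<forall>(l, r)\<in>R. l \<in> Arr \<and> r \<in> Arr \<and> dm l = zero \<and> dm r = zero \<and> cd l = cd r)"

definition is_term :: "'a set \<Rightarrow> ('a \<Rightarrow> 'o) \<Rightarrow> 'o \<Rightarrow> 'a \<Rightarrow> bool" where
  "is_term Arr dm zero P \<longleftrightarrow> P \<in> Arr \<and> dm P = zero"

definition reduces ::
  "('a \<Rightarrow> 'o) \<Rightarrow> ('a \<Rightarrow> 'o) \<Rightarrow> ('a \<Rightarrow> 'a \<Rightarrow> 'a) \<Rightarrow> 'a set \<Rightarrow> ('a \<times> 'a) set \<Rightarrow> 'a \<Rightarrow> 'a \<Rightarrow> bool" where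
  "reduces dm cd cmp D R P Q \<longleftrightarrow>
     (\<exists>l r d. (l, r) \<in> R \<and> d \<in> D \<and> cd l = dm d \<and> P = cmp d l \<and> Q = cmp d r)"

definition comm_square ::
  "'a set \<Rightarrow> ('a \<Rightarrow> 'o) \<Rightarrow> ('a \<Rightarrow> 'o) \<Rightarrow> ('a \<Rightarrow> 'a \<Rightarrow> 'a) \<Rightarrow> 'a \<Rightarrow> 'a \<Rightarrow> 'a \<Rightarrow> 'a \<Rightarrow> bool" where
  "comm_square Arr dm cd cmp a1 a2 c1 c2 \<longleftrightarrow>
     a1 \<in> Arr \<and> a2 \<in> Arr \<and> c1 \<in> Arr \<and> c2 \<in> Arr \<and>
     dm a1 = dm a2 \<and> dm c1 = cd a1 \<and> dm c2 = cd a2 \<and> cd c1 = cd c2 \<and>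
     cmp c1 a1 = cmp c2 a2"

text \<open>Candidate (I5, e, f, g) for the square c1 o a1 = c2 o a2; I5 = cd e.\<close>

definition candidate ::
  "'a set \<Rightarrow> ('a \<Rightarrow> 'o) \<Rightarrow> ('a \<Rightarrow> 'o) \<Rightarrow> ('a \<Rightarrow> 'a \<Rightarrow> 'a) \<Rightarrow>
   'a \<Rightarrow> 'a \<Rightarrow> 'a \<Rightarrow> 'a \<Rightarrow> 'a \<Rightarrow> 'a \<Rightarrow> 'a \<Rightarrow> bool" where
  "candidate Arr dm cd cmp a1 a2 c1 c2 e f g \<longleftrightarrow>
     e \<in> Arr \<and> f \<in> Arr \<and> g \<in> Arr \<and>
     dm e = cd a1 \<and> dm f = cd a2 \<and> cd f = cd e \<and> dm g = cd e \<and> cd g = cd c1 \<and>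
     cmp e a1 = cmp f a2 \<and> cmp g e = c1 \<and> cmp g f = c2"

definition RPO ::
  "'a set \<Rightarrow> ('a \<Rightarrow> 'o) \<Rightarrow> ('a \<Rightarrow> 'o) \<Rightarrow> ('a \<Rightarrow> 'a \<Rightarrow> 'a) \<Rightarrow>
   'a \<Rightarrow> 'a \<Rightarrow> 'a \<Rightarrow> 'a \<Rightarrow> 'a \<Rightarrow> 'a \<Rightarrow> 'a \<Rightarrow> bool" where
  "RPO Arr dm cd cmp a1 a2 c1 c2 e f g \<longleftrightarrow>
     candidate Arr dm cd cmp a1 a2 c1 c2 e f g \<and>
     (\<forall>e' f' g'. candidate Arr dm cd cmp a1 a2 c1 c2 e' f' g' \<longrightarrow>
        (\<exists>!h. h \<in> Arr \<and> dm h = cd e \<and> cd h = cd e' \<and>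
              cmp h e = e' \<and> cmp h f = f' \<and> cmp g' h = g))"

definition IPO ::
  "'a set \<Rightarrow> ('a \<Rightarrow> 'o) \<Rightarrow> ('a \<Rightarrow> 'o) \<Rightarrow> ('a \<Rightarrow> 'a \<Rightarrow> 'a) \<Rightarrow> ('o \<Rightarrow> 'a) \<Rightarrow>
   'a \<Rightarrow> 'a \<Rightarrow> 'a \<Rightarrow> 'a \<Rightarrow> bool" where
  "IPO Arr dm cd cmp idt a1 a2 c1 c2 \<longleftrightarrow>
     comm_square Arr dm cd cmp a1 a2 c1 c2 \<and>
     RPO Arr dm cd cmp a1 a2 c1 c2 c1 c2 (idt (cd c1))"

definition has_redex_RPOs ::
  "'a set \<Rightarrow> ('a \<Rightarrow> 'o) \<Rightarrow> ('a \<Rightarrow> 'o) \<Rightarrow> ('a \<Rightarrow> 'a \<Rightarrow> 'a) \<Rightarrow>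
   'o \<Rightarrow> 'a set \<Rightarrow> ('a \<times> 'a) set \<Rightarrow> bool" where
  "has_redex_RPOs Arr dm cd cmp zero D R \<longleftrightarrow>
     (\<forall>C P l r d. is_term Arr dm zero P \<longrightarrow> (l, r) \<in> R \<longrightarrow> d \<in> D \<longrightarrow>
        comm_square Arr dm cd cmp P l C d \<longrightarrow>
        (\<exists>e f g. RPO Arr dm cd cmp P l C d e f g))"

definition ipo_trans ::
  "'a set \<Rightarrow> ('a \<Rightarrow> 'o) \<Rightarrow> ('a \<Rightarrow> 'o) \<Rightarrow> ('a \<Rightarrow> 'a \<Rightarrow> 'a) \<Rightarrow> ('o \<Rightarrow> 'a) \<Rightarrow>
   'a set \<Rightarrow> ('a \<times> 'a) set \<Rightarrow> 'a \<Rightarrow> 'a \<Rightarrow> 'a \<Rightarrow> bool" where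
  "ipo_trans Arr dm cd cmp idt D R P C P' \<longleftrightarrow>
     (\<exists>l r d. d \<in> D \<and> (l, r) \<in> R \<and> IPO Arr dm cd cmp idt P l C d \<and> P' = cmp d r)"

definition L_bisimulation ::
  "'a set \<Rightarrow> ('a \<Rightarrow> 'o) \<Rightarrow> ('a \<Rightarrow> 'o) \<Rightarrow> ('a \<Rightarrow> 'a \<Rightarrow> 'a) \<Rightarrow> ('o \<Rightarrow> 'a) \<Rightarrow>
   'o \<Rightarrow> 'a set \<Rightarrow> ('a \<times> 'a) set \<Rightarrow> 'a set \<Rightarrow> ('a \<Rightarrow> 'a \<Rightarrow> bool) \<Rightarrow> bool" where
  "L_bisimulation Arr dm cd cmp idt zero D R L Rel \<longleftrightarrow>
     (\<forall>P Q. Rel P Q \<longrightarrow> is_term Arr dm zero P \<and> is_term Arr dm zero Q \<and> cd P = cd Q) \<and>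
     (\<forall>P Q. Rel P Q \<longrightarrow> Rel Q P) \<and>
     (\<forall>P Q C P'. Rel P Q \<longrightarrow> ipo_trans Arr dm cd cmp idt D R P C P' \<longrightarrow>
        (if C \<in> L then (\<exists>Q'. ipo_trans Arr dm cd cmp idt D R Q C Q' \<and> Rel P' Q')
         else (\<exists>Q'. reduces dm cd cmp D R (cmp C Q) Q' \<and> Rel P' Q')))"

definition L_bisimilar ::
  "'a set \<Rightarrow> ('a \<Rightarrow> 'o) \<Rightarrow> ('a \<Rightarrow> 'o) \<Rightarrow> ('a \<Rightarrow> 'a \<Rightarrow> 'a) \<Rightarrow> ('o \<Rightarrow> 'a) \<Rightarrow>
   'o \<Rightarrow> 'a set \<Rightarrow> ('a \<times> 'a) set \<Rightarrow> 'a set \<Rightarrow> 'a \<Rightarrow> 'a \<Rightarrow> bool" where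
  "L_bisimilar Arr dm cd cmp idt zero D R L P Q \<longleftrightarrow>
     (\<exists>Rel. L_bisimulation Arr dm cd cmp idt zero D R L Rel \<and> Rel P Q)"

definition IPO_closed ::
  "'a set \<Rightarrow> ('a \<Rightarrow> 'o) \<Rightarrow> ('a \<Rightarrow> 'o) \<Rightarrow> ('a \<Rightarrow> 'a \<Rightarrow> 'a) \<Rightarrow> ('o \<Rightarrow> 'a) \<Rightarrow> 'a set \<Rightarrow> bool" where
  "IPO_closed Arr dm cd cmp idt L \<longleftrightarrow>
     (\<forall>a b c d. IPO Arr dm cd cmp idt a c b d \<longrightarrow> b \<in> L \<longrightarrow> c \<in> L)"

end

theory Submission
  imports Defs
begin

locale cat =
  fixes Arr :: "'a set" and dm cd :: "'a \<Rightarrow> 'o" and cmp :: "'a \<Rightarrow> 'a \<Rightarrow> 'a"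
    and idt :: "'o \<Rightarrow> 'a"
  assumes C: "category Arr dm cd cmp idt"
begin

lemma idt [simp]: "idt x \<in> Arr" "dm (idt x) = x" "cd (idt x) = x"
  using C unfolding category_def by auto

lemma comp [simp]: "f \<in> Arr \<Longrightarrow> g \<in> Arr \<Longrightarrow> cd f = dm g \<Longrightarrow> cmp g f \<in> Arr"
  "f \<in> Arr \<Longrightarrow> g \<in> Arr \<Longrightarrow> cd f = dm g \<Longrightarrow> dm (cmp g f) = dm f"
  "f \<in> Arr \<Longrightarrow> g \<in> Arr \<Longrightarrow> cd f = dm g \<Longrightarrow> cd (cmp g f) = cd g"
  using C unfolding category_def by auto

lemma idl: "f \<in> Arr \<Longrightarrow> x = cd f \<Longrightarrow> cmp (idt x) f = f"
  and idr: "f \<in> Arr \<Longrightarrow> x = dm f \<Longrightarrow> cmp f (idt x) = f"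
  using C unfolding category_def by auto

lemma assoc: "f \<in> Arr \<Longrightarrow> g \<in> Arr \<Longrightarrow> h \<in> Arr \<Longrightarrow> cd f = dm g \<Longrightarrow> cd g = dm h \<Longrightarrow>
  cmp h (cmp g f) = cmp (cmp h g) f"
  using C unfolding category_def by auto

abbreviation "cand \<equiv> candidate Arr dm cd cmp"
abbreviation "rpo \<equiv> RPO Arr dm cd cmp"
abbreviation "ipo \<equiv> IPO Arr dm cd cmp idt"
abbreviation "sq \<equiv> comm_square Arr dm cd cmp"

lemma RPO_cand: "rpo a1 a2 c1 c2 e f g \<Longrightarrow> cand a1 a2 c1 c2 e f g"
  unfolding RPO_def by auto

lemma RPO_ex: "rpo a1 a2 c1 c2 e f g \<Longrightarrow> cand a1 a2 c1 c2 e' f' g' \<Longrightarrow>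
  \<exists>h. h \<in> Arr \<and> dm h = cd e \<and> cd h = cd e' \<and> cmp h e = e' \<and> cmp h f = f' \<and> cmp g' h = g"
  unfolding RPO_def by metis

lemma RPO_un: "rpo a1 a2 c1 c2 e f g \<Longrightarrow> cand a1 a2 c1 c2 e' f' g' \<Longrightarrow>
  h1 \<in> Arr \<and> dm h1 = cd e \<and> cd h1 = cd e' \<and> cmp h1 e = e' \<and> cmp h1 f = f' \<and> cmp g' h1 = g \<Longrightarrow>
  h2 \<in> Arr \<and> dm h2 = cd e \<and> cd h2 = cd e' \<and> cmp h2 e = e' \<and> cmp h2 f = f' \<and> cmp g' h2 = g \<Longrightarrow>
  h1 = h2"
  unfolding RPO_def by metis

lemma IPO_I:
  assumes s: "sq a1 a2 c1 c2"
    and ex: "\<And>e' f' g'. cand a1 a2 c1 c2 e' f' g' \<Longrightarrow>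
       \<exists>h. h \<in> Arr \<and> dm h = cd c1 \<and> cd h = cd e' \<and> cmp h c1 = e' \<and> cmp h c2 = f' \<and> cmp g' h = idt (cd c1)"
    and un: "\<And>e' f' g' h1 h2. cand a1 a2 c1 c2 e' f' g' \<Longrightarrow>
       h1 \<in> Arr \<and> dm h1 = cd c1 \<and> cd h1 = cd e' \<and> cmp h1 c1 = e' \<and> cmp h1 c2 = f' \<and> cmp g' h1 = idt (cd c1) \<Longrightarrow>
       h2 \<in> Arr \<and> dm h2 = cd c1 \<and> cd h2 = cd e' \<and> cmp h2 c1 = e' \<and> cmp h2 c2 = f' \<and> cmp g' h2 = idt (cd c1) \<Longrightarrow>
       h1 = h2"
  shows "ipo a1 a2 c1 c2"
proof -
  have "cand a1 a2 c1 c2 c1 c2 (idt (cd c1))"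
    using s unfolding comm_square_def candidate_def by (auto simp: idl)
  moreover have "\<forall>e' f' g'. cand a1 a2 c1 c2 e' f' g' \<longrightarrow>
        (\<exists>!h. h \<in> Arr \<and> dm h = cd c1 \<and> cd h = cd e' \<and>
              cmp h c1 = e' \<and> cmp h c2 = f' \<and> cmp g' h = idt (cd c1))"
  proof (intro allI impI)
    fix e' f' g' assume c: "cand a1 a2 c1 c2 e' f' g'"
    from ex[OF c] obtain h where "h \<in> Arr \<and> dm h = cd c1 \<and> cd h = cd e' \<and> cmp h c1 = e' \<and> cmp h c2 = f' \<and> cmp g' h = idt (cd c1)" by blast
    then show "\<exists>!h. h \<in> Arr \<and> dm h = cd c1 \<and> cd h = cd e' \<and>
              cmp h c1 = e' \<and> cmp h c2 = f' \<and> cmp g' h = idt (cd c1)"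
      using un[OF c] by blast
  qed
  ultimately show ?thesis using s unfolding IPO_def RPO_def by blast
qed

lemma IPO_sq: "ipo a1 a2 c1 c2 \<Longrightarrow> sq a1 a2 c1 c2" unfolding IPO_def by auto
lemma IPO_rpo: "ipo a1 a2 c1 c2 \<Longrightarrow> rpo a1 a2 c1 c2 c1 c2 (idt (cd c1))" unfolding IPO_def by auto

lemma rpo_ipo:
  assumes s: "sq a1 a2 c1 c2" and R: "rpo a1 a2 c1 c2 e f g"
  shows "ipo a1 a2 e f"
proof -
  have c: "cand a1 a2 c1 c2 e f g" using R by (rule RPO_cand)
  then have e: "e \<in> Arr" "f \<in> Arr" "g \<in> Arr" "dm e = cd a1" "dm f = cd a2" "cd f = cd e"
    "dm g = cd e" "cd g = cd c1" "cmp e a1 = cmp f a2" "cmp g e = c1" "cmp g f = c2"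
    unfolding candidate_def by auto
  have s2: "sq a1 a2 e f" using s e unfolding comm_square_def by auto
  have gid: "cmp g (idt (cd e)) = g" using e by (simp add: idr)
  show ?thesis
  proof (rule IPO_I[OF s2])
    fix e' f' g' assume c': "cand a1 a2 e f e' f' g'"
    then have x: "e' \<in> Arr" "f' \<in> Arr" "g' \<in> Arr" "dm e' = cd a1" "dm f' = cd a2" "cd f' = cd e'"
      "dm g' = cd e'" "cd g' = cd e" "cmp e' a1 = cmp f' a2" "cmp g' e' = e" "cmp g' f' = f"
      unfolding candidate_def by auto
    have cc: "cand a1 a2 c1 c2 e' f' (cmp g g')"
      using e x unfolding candidate_def by (auto simp: assoc[symmetric])
    from RPO_ex[OF R cc] obtain h where h: "h \<in> Arr" "dm h = cd e" "cd h = cd e'" "cmp h e = e'"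
      "cmp h f = f'" "cmp (cmp g g') h = g" by blast
    have "cmp g' h = idt (cd e)"
    proof (rule RPO_un[OF R c])
      show "cmp g' h \<in> Arr \<and> dm (cmp g' h) = cd e \<and> cd (cmp g' h) = cd e \<and>
        cmp (cmp g' h) e = e \<and> cmp (cmp g' h) f = f \<and> cmp g (cmp g' h) = g"
        using e x h by (auto simp: assoc[symmetric])
      show "idt (cd e) \<in> Arr \<and> dm (idt (cd e)) = cd e \<and> cd (idt (cd e)) = cd e \<and>
        cmp (idt (cd e)) e = e \<and> cmp (idt (cd e)) f = f \<and> cmp g (idt (cd e)) = g"
        using e by (auto simp: idl idr)
    qed
    then show "\<exists>h. h \<in> Arr \<and> dm h = cd e \<and> cd h = cd e' \<and> cmp h e = e' \<and> cmp h f = f' \<and> cmp g' h = idt (cd e)"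
      using h by blast
  next
    fix e' f' g' h1 h2 assume c': "cand a1 a2 e f e' f' g'"
    and h1: "h1 \<in> Arr \<and> dm h1 = cd e \<and> cd h1 = cd e' \<and> cmp h1 e = e' \<and> cmp h1 f = f' \<and> cmp g' h1 = idt (cd e)"
    and h2: "h2 \<in> Arr \<and> dm h2 = cd e \<and> cd h2 = cd e' \<and> cmp h2 e = e' \<and> cmp h2 f = f' \<and> cmp g' h2 = idt (cd e)"
    then have x: "e' \<in> Arr" "f' \<in> Arr" "g' \<in> Arr" "dm e' = cd a1" "dm f' = cd a2" "cd f' = cd e'"
      "dm g' = cd e'" "cd g' = cd e" "cmp e' a1 = cmp f' a2" "cmp g' e' = e" "cmp g' f' = f"
      unfolding candidate_def by auto
    have cc: "cand a1 a2 c1 c2 e' f' (cmp g g')"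
      using e x unfolding candidate_def by (auto simp: assoc[symmetric])
    have "cmp (cmp g g') h1 = g" using e x h1 gid by (auto simp: assoc[symmetric])
    moreover have "cmp (cmp g g') h2 = g" using e x h2 gid by (auto simp: assoc[symmetric])
    ultimately show "h1 = h2" using RPO_un[OF R cc] h1 h2 by blast
  qed
qed

lemma right_ipo:
  assumes O: "ipo (cmp C P) l C' d" and R: "rpo P l (cmp C' C) d e f g"
    and CP: "C \<in> Arr" "P \<in> Arr" "cd P = dm C"
  shows "ipo C e C' g"
proof -
  have os: "sq (cmp C P) l C' d" using O by (rule IPO_sq)
  have OR: "rpo (cmp C P) l C' d C' d (idt (cd C'))" using O by (rule IPO_rpo)
  have o: "l \<in> Arr" "C' \<in> Arr" "d \<in> Arr" "dm l = dm P" "dm C' = cd C" "dm d = cd l" "cd C' = cd d"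
    "cmp C' (cmp C P) = cmp d l"
    using os CP unfolding comm_square_def by auto
  have c: "cand P l (cmp C' C) d e f g" using R by (rule RPO_cand)
  then have e: "e \<in> Arr" "f \<in> Arr" "g \<in> Arr" "dm e = cd P" "dm f = cd l" "cd f = cd e"
    "dm g = cd e" "cd g = cd C'" "cmp e P = cmp f l" "cmp g e = cmp C' C" "cmp g f = d"
    using CP o unfolding candidate_def by auto
  have s2: "sq C e C' g" using e o CP unfolding comm_square_def by auto
  show ?thesis
  proof (rule IPO_I[OF s2])
    fix e' f' g' assume c': "cand C e C' g e' f' g'"
    then have x: "e' \<in> Arr" "f' \<in> Arr" "g' \<in> Arr" "dm e' = cd C" "dm f' = cd e" "cd f' = cd e'"
      "dm g' = cd e'" "cd g' = cd C'" "cmp e' C = cmp f' e" "cmp g' e' = C'" "cmp g' f' = g"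
      unfolding candidate_def by auto
    have A: "cmp e' (cmp C P) = cmp (cmp f' f) l"
    proof -
      have "cmp e' (cmp C P) = cmp (cmp e' C) P" using x CP by (simp add: assoc)
      also have "\<dots> = cmp f' (cmp e P)" using x e CP by (simp add: assoc[symmetric])
      also have "\<dots> = cmp (cmp f' f) l" using x e o by (simp add: assoc)
      finally show ?thesis .
    qed
    have cc: "cand (cmp C P) l C' d e' (cmp f' f) g'"
      using e x o CP A unfolding candidate_def by (auto simp: assoc)
    from RPO_ex[OF OR cc] obtain h where h: "h \<in> Arr" "dm h = cd C'" "cd h = cd e'" "cmp h C' = e'"
      "cmp h d = cmp f' f" "cmp g' h = idt (cd C')" by blast
    have B: "cmp (cmp f' e) P = cmp (cmp f' f) l" using x e CP o by (simp add: assoc[symmetric])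
    have cc2: "cand P l (cmp C' C) d (cmp f' e) (cmp f' f) g'"
      using e x o CP B unfolding candidate_def by (auto simp: assoc)
    have "cmp h g = f'"
    proof (rule RPO_un[OF R cc2])
      have "cmp (cmp h g) e = cmp f' e"
      proof -
        have "cmp (cmp h g) e = cmp h (cmp C' C)" using h e o by (simp add: assoc[symmetric])
        also have "\<dots> = cmp f' e" using h e o x CP by (simp add: assoc)
        finally show ?thesis .
      qed
      moreover have "cmp (cmp h g) f = cmp f' f" using h e o x by (simp add: assoc[symmetric])
      moreover have "cmp g' (cmp h g) = g" using h e o x by (simp add: assoc idl)
      ultimately show "cmp h g \<in> Arr \<and> dm (cmp h g) = cd e \<and> cd (cmp h g) = cd (cmp f' e) \<and>
        cmp (cmp h g) e = cmp f' e \<and> cmp (cmp h g) f = cmp f' f \<and> cmp g' (cmp h g) = g"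
        using h e o x by auto
      show "f' \<in> Arr \<and> dm f' = cd e \<and> cd f' = cd (cmp f' e) \<and>
        cmp f' e = cmp f' e \<and> cmp f' f = cmp f' f \<and> cmp g' f' = g" using x e by auto
    qed
    then show "\<exists>h. h \<in> Arr \<and> dm h = cd C' \<and> cd h = cd e' \<and> cmp h C' = e' \<and> cmp h g = f' \<and> cmp g' h = idt (cd C')"
      using h by blast
  next
    fix e' f' g' h1 h2 assume c': "cand C e C' g e' f' g'"
    and h1: "h1 \<in> Arr \<and> dm h1 = cd C' \<and> cd h1 = cd e' \<and> cmp h1 C' = e' \<and> cmp h1 g = f' \<and> cmp g' h1 = idt (cd C')"
    and h2: "h2 \<in> Arr \<and> dm h2 = cd C' \<and> cd h2 = cd e' \<and> cmp h2 C' = e' \<and> cmp h2 g = f' \<and> cmp g' h2 = idt (cd C')"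
    then have x: "e' \<in> Arr" "f' \<in> Arr" "g' \<in> Arr" "dm e' = cd C" "dm f' = cd e" "cd f' = cd e'"
      "dm g' = cd e'" "cd g' = cd C'" "cmp e' C = cmp f' e" "cmp g' e' = C'" "cmp g' f' = g"
      unfolding candidate_def by auto
    have A: "cmp e' (cmp C P) = cmp (cmp f' f) l"
    proof -
      have "cmp e' (cmp C P) = cmp (cmp e' C) P" using x CP by (simp add: assoc)
      also have "\<dots> = cmp f' (cmp e P)" using x e CP by (simp add: assoc[symmetric])
      also have "\<dots> = cmp (cmp f' f) l" using x e o by (simp add: assoc)
      finally show ?thesis .
    qed
    have cc: "cand (cmp C P) l C' d e' (cmp f' f) g'"
      using e x o CP A unfolding candidate_def by (auto simp: assoc)
    have "cmp h1 d = cmp f' f" using h1 e o by (metis assoc)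
    moreover have "cmp h2 d = cmp f' f" using h2 e o by (metis assoc)
    ultimately show "h1 = h2" using RPO_un[OF OR cc] h1 h2 by blast
  qed
qed

lemma paste_ipo:
  assumes Lf: "ipo Q l' e f'" and Rt: "ipo C e C' g"
    and W: "rpo Q l' (cmp C' C) (cmp g f') e0 f0 g0"
  shows "ipo (cmp C Q) l' C' (cmp g f')"
proof -
  have ls: "sq Q l' e f'" using Lf by (rule IPO_sq)
  have LR: "rpo Q l' e f' e f' (idt (cd e))" using Lf by (rule IPO_rpo)
  have rs: "sq C e C' g" using Rt by (rule IPO_sq)
  have RR: "rpo C e C' g C' g (idt (cd C'))" using Rt by (rule IPO_rpo)
  have a: "Q \<in> Arr" "l' \<in> Arr" "e \<in> Arr" "f' \<in> Arr" "dm Q = dm l'" "dm e = cd Q" "dm f' = cd l'"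
    "cd e = cd f'" "cmp e Q = cmp f' l'" using ls unfolding comm_square_def by auto
  have b: "C \<in> Arr" "C' \<in> Arr" "g \<in> Arr" "dm C = dm e" "dm C' = cd C" "dm g = cd e" "cd C' = cd g"
    "cmp C' C = cmp g e" using rs unfolding comm_square_def by auto
  have cw: "cand Q l' (cmp C' C) (cmp g f') e0 f0 g0" using W by (rule RPO_cand)
  then have w: "e0 \<in> Arr" "f0 \<in> Arr" "g0 \<in> Arr" "dm e0 = cd Q" "dm f0 = cd l'" "cd f0 = cd e0"
    "dm g0 = cd e0" "cd g0 = cd C'" "cmp e0 Q = cmp f0 l'" "cmp g0 e0 = cmp C' C" "cmp g0 f0 = cmp g f'"
    using a b unfolding candidate_def by auto
  have O1: "cmp C' (cmp C Q) = cmp (cmp g f') l'"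
  proof -
    have "cmp C' (cmp C Q) = cmp (cmp C' C) Q" using a b by (simp add: assoc)
    also have "\<dots> = cmp g (cmp e Q)" using a b by (simp add: assoc[symmetric])
    also have "\<dots> = cmp (cmp g f') l'" using a b by (simp add: assoc)
    finally show ?thesis .
  qed
  have os: "sq (cmp C Q) l' C' (cmp g f')" using a b O1 unfolding comm_square_def by auto
  have c1: "cand Q l' (cmp C' C) (cmp g f') e f' g" using a b unfolding candidate_def by auto
  from RPO_ex[OF W c1] obtain k1 where k1: "k1 \<in> Arr" "dm k1 = cd e0" "cd k1 = cd e" "cmp k1 e0 = e"
    "cmp k1 f0 = f'" "cmp g k1 = g0" by blast
  have c2: "cand Q l' e f' e0 f0 k1" using a w k1 unfolding candidate_def by auto
  from RPO_ex[OF LR c2] obtain j where j: "j \<in> Arr" "dm j = cd e" "cd j = cd e0" "cmp j e = e0"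
    "cmp j f' = f0" "cmp k1 j = idt (cd e)" by blast
  have common: "\<And>e' f'' g'. cand (cmp C Q) l' C' (cmp g f') e' f'' g' \<Longrightarrow>
     \<exists>k3. k3 \<in> Arr \<and> dm k3 = cd e0 \<and> cd k3 = cd e' \<and> cmp k3 e0 = cmp e' C \<and> cmp k3 f0 = f'' \<and> cmp g' k3 = g0
     \<and> cand (cmp C Q) l' C' (cmp g f') e' f'' g' \<and> cand Q l' (cmp C' C) (cmp g f') (cmp e' C) f'' g'"
  proof -
    fix e' f'' g' assume c': "cand (cmp C Q) l' C' (cmp g f') e' f'' g'"
    then have x: "e' \<in> Arr" "f'' \<in> Arr" "g' \<in> Arr" "dm e' = cd C" "dm f'' = cd l'" "cd f'' = cd e'"
      "dm g' = cd e'" "cd g' = cd C'" "cmp e' (cmp C Q) = cmp f'' l'" "cmp g' e' = C'" "cmp g' f'' = cmp g f'"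
      using a b unfolding candidate_def by auto
    have cc: "cand Q l' (cmp C' C) (cmp g f') (cmp e' C) f'' g'"
      using a b x unfolding candidate_def by (auto simp: assoc[symmetric])
    from RPO_ex[OF W cc] c' cc show "?thesis e' f'' g'" using x b by auto
  qed
  show ?thesis
  proof (rule IPO_I[OF os])
    fix e' f'' g' assume c': "cand (cmp C Q) l' C' (cmp g f') e' f'' g'"
    then have x: "e' \<in> Arr" "f'' \<in> Arr" "g' \<in> Arr" "dm e' = cd C" "dm f'' = cd l'" "cd f'' = cd e'"
      "dm g' = cd e'" "cd g' = cd C'" "cmp e' (cmp C Q) = cmp f'' l'" "cmp g' e' = C'" "cmp g' f'' = cmp g f'"
      using a b unfolding candidate_def by auto
    from common[OF c'] obtain k3 where k3: "k3 \<in> Arr" "dm k3 = cd e0" "cd k3 = cd e'" "cmp k3 e0 = cmp e' C"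
      "cmp k3 f0 = f''" "cmp g' k3 = g0" by blast
    define f1 where "f1 = cmp k3 j"
    have f1: "f1 \<in> Arr" "dm f1 = cd e" "cd f1 = cd e'" using j k3 unfolding f1_def by auto
    have f1e: "cmp f1 e = cmp e' C" using j k3 a unfolding f1_def by (simp add: assoc[symmetric])
    have f1f: "cmp f1 f' = f''" using j k3 a unfolding f1_def by (simp add: assoc[symmetric])
    have f1g: "cmp g' f1 = g"
    proof -
      have "cmp g' f1 = cmp (cmp g' k3) j" using j k3 x unfolding f1_def by (simp add: assoc)
      also have "\<dots> = cmp (cmp g k1) j" using k1 k3 by simp
      also have "\<dots> = cmp g (cmp k1 j)" using j(1,2,3) k1(1,2,3) b by (simp add: assoc)
      also have "\<dots> = g" using j b by (simp add: idr)
      finally show ?thesis .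
    qed
    have cr: "cand C e C' g e' f1 g'" using x f1 f1e f1g b a unfolding candidate_def by auto
    from RPO_ex[OF RR cr] obtain h where h: "h \<in> Arr" "dm h = cd C'" "cd h = cd e'" "cmp h C' = e'"
      "cmp h g = f1" "cmp g' h = idt (cd C')" by blast
    have "cmp h (cmp g f') = f''" using h a b f1f by (simp add: assoc)
    then show "\<exists>h. h \<in> Arr \<and> dm h = cd C' \<and> cd h = cd e' \<and> cmp h C' = e' \<and> cmp h (cmp g f') = f'' \<and> cmp g' h = idt (cd C')"
      using h by blast
  next
    fix e' f'' g' h1 h2 assume c': "cand (cmp C Q) l' C' (cmp g f') e' f'' g'"
    and h1: "h1 \<in> Arr \<and> dm h1 = cd C' \<and> cd h1 = cd e' \<and> cmp h1 C' = e' \<and> cmp h1 (cmp g f') = f'' \<and> cmp g' h1 = idt (cd C')"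
    and h2: "h2 \<in> Arr \<and> dm h2 = cd C' \<and> cd h2 = cd e' \<and> cmp h2 C' = e' \<and> cmp h2 (cmp g f') = f'' \<and> cmp g' h2 = idt (cd C')"
    then have x: "e' \<in> Arr" "f'' \<in> Arr" "g' \<in> Arr" "dm e' = cd C" "dm f'' = cd l'" "cd f'' = cd e'"
      "dm g' = cd e'" "cd g' = cd C'" "cmp e' (cmp C Q) = cmp f'' l'" "cmp g' e' = C'" "cmp g' f'' = cmp g f'"
      using a b unfolding candidate_def by auto
    from common[OF c'] have cc: "cand Q l' (cmp C' C) (cmp g f') (cmp e' C) f'' g'" by blast
    from common[OF c'] obtain k3 where k3: "k3 \<in> Arr" "dm k3 = cd e0" "cd k3 = cd e'" "cmp k3 e0 = cmp e' C"
      "cmp k3 f0 = f''" "cmp g' k3 = g0" by blast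
    define f1 where "f1 = cmp k3 j"
    have f1: "f1 \<in> Arr" "dm f1 = cd e" "cd f1 = cd e'" using j k3 unfolding f1_def by auto
    have f1e: "cmp f1 e = cmp e' C" using j k3 a unfolding f1_def by (simp add: assoc[symmetric])
    have f1g: "cmp g' f1 = g"
    proof -
      have "cmp g' f1 = cmp (cmp g' k3) j" using j k3 x unfolding f1_def by (simp add: assoc)
      also have "\<dots> = cmp (cmp g k1) j" using k1 k3 by simp
      also have "\<dots> = cmp g (cmp k1 j)" using j(1,2,3) k1(1,2,3) b by (simp add: assoc)
      also have "\<dots> = g" using j b by (simp add: idr)
      finally show ?thesis .
    qed
    have cr: "cand C e C' g e' f1 g'" using x f1 f1e f1g b a unfolding candidate_def by auto
    have hg: "cmp h g = f1" if hh: "h \<in> Arr \<and> dm h = cd C' \<and> cd h = cd e' \<and> cmp h C' = e' \<and> cmp h (cmp g f') = f'' \<and> cmp g' h = idt (cd C')" for h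
    proof -
      define m where "m = cmp (cmp h g) k1"
      have m: "m \<in> Arr" "dm m = cd e0" "cd m = cd e'" using hh k1 b unfolding m_def by auto
      have me: "cmp m e0 = cmp e' C"
      proof -
        have "cmp m e0 = cmp (cmp h g) e" using hh k1 a b w unfolding m_def by (simp add: assoc[symmetric])
        also have "\<dots> = cmp h (cmp C' C)" using hh a b by (simp add: assoc[symmetric])
        also have "\<dots> = cmp (cmp h C') C" by (rule assoc) (use hh b in auto)
        also have "\<dots> = cmp e' C" using hh by simp
        finally show ?thesis .
      qed
      have mf: "cmp m f0 = f''"
      proof -
        have "cmp m f0 = cmp (cmp h g) f'" using hh k1 a b w unfolding m_def by (simp add: assoc[symmetric])
        also have "\<dots> = f''" using hh a b by (simp add: assoc[symmetric])
        finally show ?thesis .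
      qed
      have mg: "cmp g' m = g0"
      proof -
        have "cmp g' m = cmp (cmp (cmp g' h) g) k1" using hh k1 b x unfolding m_def by (simp add: assoc)
        also have "\<dots> = g0" using hh k1 b by (simp add: idl)
        finally show ?thesis .
      qed
      have cde: "cd (cmp e' C) = cd e'" using x b by simp
      have "m = k3" by (rule RPO_un[OF W cc]) (use m me mf mg k3 cde in auto)
      have "cmp h g = cmp (cmp h g) (cmp k1 j)" using hh b j by (simp add: idr)
      also have "\<dots> = cmp m j" using hh b j(1,2,3,6) k1(1,2,3) unfolding m_def by (simp add: assoc[symmetric])
      also have "\<dots> = f1" using \<open>m = k3\<close> f1_def by simp
      finally show ?thesis .
    qed
    show "h1 = h2" using RPO_un[OF RR cr] h1 h2 hg[OF h1] hg[OF h2] by blast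
  qed
qed

end

lemma bisimilar_is_bisim:
  "L_bisimulation Arr dm cd cmp idt zero D R L (L_bisimilar Arr dm cd cmp idt zero D R L)"
proof -
  let ?B = "L_bisimilar Arr dm cd cmp idt zero D R L"
  have 1: "\<forall>P Q. ?B P Q \<longrightarrow> is_term Arr dm zero P \<and> is_term Arr dm zero Q \<and> cd P = cd Q"
  proof (intro allI impI)
    fix P Q assume "?B P Q"
    then obtain Rel where "L_bisimulation Arr dm cd cmp idt zero D R L Rel" "Rel P Q"
      unfolding L_bisimilar_def by blast
    then show "is_term Arr dm zero P \<and> is_term Arr dm zero Q \<and> cd P = cd Q"
      unfolding L_bisimulation_def by blast
  qed
  have 2: "\<forall>P Q. ?B P Q \<longrightarrow> ?B Q P"
  proof (intro allI impI)
    fix P Q assume "?B P Q"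
    then obtain Rel where r: "L_bisimulation Arr dm cd cmp idt zero D R L Rel" "Rel P Q"
      unfolding L_bisimilar_def by blast
    then have "Rel Q P" unfolding L_bisimulation_def by blast
    then show "?B Q P" using r(1) unfolding L_bisimilar_def by blast
  qed
  have 3: "\<forall>P Q C P'. ?B P Q \<longrightarrow> ipo_trans Arr dm cd cmp idt D R P C P' \<longrightarrow>
        (if C \<in> L then (\<exists>Q'. ipo_trans Arr dm cd cmp idt D R Q C Q' \<and> ?B P' Q')
         else (\<exists>Q'. reduces dm cd cmp D R (cmp C Q) Q' \<and> ?B P' Q'))"
  proof (intro allI impI)
    fix P Q C P' assume "?B P Q" and t: "ipo_trans Arr dm cd cmp idt D R P C P'"
    then obtain Rel where B: "L_bisimulation Arr dm cd cmp idt zero D R L Rel" "Rel P Q"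
      unfolding L_bisimilar_def by blast
    then have "if C \<in> L then (\<exists>Q'. ipo_trans Arr dm cd cmp idt D R Q C Q' \<and> Rel P' Q')
         else (\<exists>Q'. reduces dm cd cmp D R (cmp C Q) Q' \<and> Rel P' Q')"
      using t unfolding L_bisimulation_def by blast
    then show "if C \<in> L then (\<exists>Q'. ipo_trans Arr dm cd cmp idt D R Q C Q' \<and> ?B P' Q')
         else (\<exists>Q'. reduces dm cd cmp D R (cmp C Q) Q' \<and> ?B P' Q')"
      using B(1) unfolding L_bisimilar_def by (auto split: if_splits)
  qed
  show ?thesis unfolding L_bisimulation_def using 1 2 3 by (intro conjI)
qed

theorem mainTheorem1:
  fixes Arr :: "'a set" and dm cd :: "'a \<Rightarrow> 'o" and cmp :: "'a \<Rightarrow> 'a \<Rightarrow> 'a"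
    and idt :: "'o \<Rightarrow> 'a" and zero :: 'o and D :: "'a set" and R :: "('a \<times> 'a) set"
    and L :: "'a set"
  assumes "reactive_system Arr dm cd cmp idt zero D R"
    and "has_redex_RPOs Arr dm cd cmp zero D R"
    and "L \<subseteq> Arr"
    and "IPO_closed Arr dm cd cmp idt L"
  shows "\<forall>P Q C. is_term Arr dm zero P \<longrightarrow> is_term Arr dm zero Q \<longrightarrow> cd Q = cd P \<longrightarrow>
           C \<in> Arr \<longrightarrow> dm C = cd P \<longrightarrow>
           L_bisimilar Arr dm cd cmp idt zero D R L P Q \<longrightarrow>
           L_bisimilar Arr dm cd cmp idt zero D R L (cmp C P) (cmp C Q)"
proof -
  note rs = assms(1)[unfolded reactive_system_def]
  interpret cat Arr dm cd cmp idt using rs by (intro cat.intro) blast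
  have DA: "D \<subseteq> Arr" using rs by blast
  have Dc: "\<And>d d'. d \<in> D \<Longrightarrow> d' \<in> D \<Longrightarrow> cd d = dm d' \<Longrightarrow> cmp d' d \<in> D" using rs by blast
  have Dr: "\<And>d d'. d \<in> Arr \<Longrightarrow> d' \<in> Arr \<Longrightarrow> cd d = dm d' \<Longrightarrow> cmp d' d \<in> D \<Longrightarrow> d \<in> D \<and> d' \<in> D"
    using rs by blast
  have RR: "\<And>l r. (l, r) \<in> R \<Longrightarrow> l \<in> Arr \<and> r \<in> Arr \<and> dm l = zero \<and> dm r = zero \<and> cd l = cd r"
    using rs by blast
  have RPOs: "\<And>C P l r d. is_term Arr dm zero P \<Longrightarrow> (l, r) \<in> R \<Longrightarrow> d \<in> D \<Longrightarrow>
        sq P l C d \<Longrightarrow> \<exists>e f g. rpo P l C d e f g"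
    using assms(2) unfolding has_redex_RPOs_def by blast
  have clo: "\<And>a b c d. ipo a c b d \<Longrightarrow> b \<in> L \<Longrightarrow> c \<in> L"
    using assms(4) unfolding IPO_closed_def by blast
  let ?B = "L_bisimilar Arr dm cd cmp idt zero D R L"
  have BB: "L_bisimulation Arr dm cd cmp idt zero D R L ?B" by (rule bisimilar_is_bisim)
  have Bt: "\<And>P Q. ?B P Q \<Longrightarrow> is_term Arr dm zero P \<and> is_term Arr dm zero Q \<and> cd P = cd Q"
    using BB unfolding L_bisimulation_def by blast
  have Bs: "\<And>P Q. ?B P Q \<Longrightarrow> ?B Q P" using BB unfolding L_bisimulation_def by blast
  have Bm: "\<And>P Q C P'. ?B P Q \<Longrightarrow> ipo_trans Arr dm cd cmp idt D R P C P' \<Longrightarrow>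
        (if C \<in> L then (\<exists>Q'. ipo_trans Arr dm cd cmp idt D R Q C Q' \<and> ?B P' Q')
         else (\<exists>Q'. reduces dm cd cmp D R (cmp C Q) Q' \<and> ?B P' Q'))"
    using BB unfolding L_bisimulation_def by blast
  define Rel where "Rel X Y \<longleftrightarrow> (\<exists>C P Q. ?B P Q \<and> C \<in> Arr \<and> dm C = cd P \<and> X = cmp C P \<and> Y = cmp C Q)"
    for X Y
  have RelI: "\<And>C P Q. ?B P Q \<Longrightarrow> C \<in> Arr \<Longrightarrow> dm C = cd P \<Longrightarrow> Rel (cmp C P) (cmp C Q)"
    unfolding Rel_def by blast
  have r1: "\<forall>X Y. Rel X Y \<longrightarrow> is_term Arr dm zero X \<and> is_term Arr dm zero Y \<and> cd X = cd Y"
  proof (intro allI impI)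
    fix X Y assume "Rel X Y"
    then obtain C P Q where h: "?B P Q" "C \<in> Arr" "dm C = cd P" "X = cmp C P" "Y = cmp C Q"
      unfolding Rel_def by blast
    then show "is_term Arr dm zero X \<and> is_term Arr dm zero Y \<and> cd X = cd Y"
      using Bt[OF h(1)] unfolding is_term_def by auto
  qed
  have r2: "\<forall>X Y. Rel X Y \<longrightarrow> Rel Y X"
  proof (intro allI impI)
    fix X Y assume "Rel X Y"
    then obtain C P Q where h: "?B P Q" "C \<in> Arr" "dm C = cd P" "X = cmp C P" "Y = cmp C Q"
      unfolding Rel_def by blast
    then show "Rel Y X" unfolding Rel_def using Bs[OF h(1)] Bt[OF h(1)] by metis
  qed
  have r3: "\<forall>X Y C' X'. Rel X Y \<longrightarrow> ipo_trans Arr dm cd cmp idt D R X C' X' \<longrightarrow>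
        (if C' \<in> L then (\<exists>Y'. ipo_trans Arr dm cd cmp idt D R Y C' Y' \<and> Rel X' Y')
         else (\<exists>Y'. reduces dm cd cmp D R (cmp C' Y) Y' \<and> Rel X' Y'))"
  proof (intro allI impI)
    fix X Y C' X' assume "Rel X Y" and tr: "ipo_trans Arr dm cd cmp idt D R X C' X'"
    then obtain C P Q where h: "?B P Q" "C \<in> Arr" "dm C = cd P" "X = cmp C P" "Y = cmp C Q"
      unfolding Rel_def by blast
    have PQ: "P \<in> Arr" "Q \<in> Arr" "dm P = zero" "dm Q = zero" "cd Q = cd P"
      using Bt[OF h(1)] unfolding is_term_def by auto
    from tr h obtain l r d where t: "d \<in> D" "(l, r) \<in> R" "ipo (cmp C P) l C' d" "X' = cmp d r"
      unfolding ipo_trans_def by blast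
    have lr: "l \<in> Arr" "r \<in> Arr" "dm l = zero" "dm r = zero" "cd l = cd r" using RR[OF t(2)] by auto
    have os: "sq (cmp C P) l C' d" using t(3) by (rule IPO_sq)
    then have o: "C' \<in> Arr" "d \<in> Arr" "dm C' = cd C" "dm d = cd l" "cd C' = cd d" "cmp C' (cmp C P) = cmp d l"
      using h PQ unfolding comm_square_def by auto
    have sqPe: "cmp (cmp C' C) P = cmp d l" using o h PQ by (simp add: assoc[symmetric])
    have sqP: "sq P l (cmp C' C) d"
      using o h PQ lr sqPe unfolding comm_square_def by auto
    from RPOs[OF _ t(2) t(1) sqP] PQ obtain e f g where W: "rpo P l (cmp C' C) d e f g"
      unfolding is_term_def by blast
    have ipoR: "ipo C e C' g" by (rule right_ipo[OF t(3) W]) (use h PQ in auto)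
    have ipoP: "ipo P l e f" by (rule rpo_ipo[OF sqP W])
    have c: "cand P l (cmp C' C) d e f g" using W by (rule RPO_cand)
    then have e: "e \<in> Arr" "f \<in> Arr" "g \<in> Arr" "dm e = cd P" "dm f = cd l" "cd f = cd e"
      "dm g = cd e" "cd g = cd C'" "cmp e P = cmp f l" "cmp g e = cmp C' C" "cmp g f = d"
      using h o unfolding candidate_def by auto
    have fg: "f \<in> D" "g \<in> D" using Dr[of f g] e t(1) by auto
    have trP: "ipo_trans Arr dm cd cmp idt D R P e (cmp f r)"
      unfolding ipo_trans_def using fg t(2) ipoP by blast
    have X'eq: "X' = cmp g (cmp f r)" using t(4) e lr by (simp add: assoc)
    have frB: "dm g = cd (cmp f r)" using e lr by simp
    have CY: "cmp C' Y = cmp g (cmp e Q)" using h e o PQ by (simp add: assoc)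
    have eL_case: "\<exists>Y'. (if C' \<in> L then ipo_trans Arr dm cd cmp idt D R Y C' Y'
                      else reduces dm cd cmp D R (cmp C' Y) Y') \<and> Rel X' Y'" if eL: "e \<in> L"
    proof -
      from Bm[OF h(1) trP] eL obtain Q' where q: "ipo_trans Arr dm cd cmp idt D R Q e Q'" "?B (cmp f r) Q'"
        by auto
      then obtain l' r' f' where q': "f' \<in> D" "(l', r') \<in> R" "ipo Q l' e f'" "Q' = cmp f' r'"
        unfolding ipo_trans_def by blast
      have lr': "l' \<in> Arr" "r' \<in> Arr" "dm l' = zero" "dm r' = zero" "cd l' = cd r'" using RR[OF q'(2)] by auto
      have ls: "sq Q l' e f'" using q'(3) by (rule IPO_sq)
      then have ll: "f' \<in> Arr" "dm f' = cd l'" "cd e = cd f'" "cmp e Q = cmp f' l'"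
        unfolding comm_square_def by auto
      have gf': "cmp g f' \<in> D" using Dc[OF q'(1) fg(2)] ll e by simp
      have Y'eq: "cmp (cmp g f') r' = cmp g Q'" using q' e ll lr' by (simp add: assoc)
      have RelY: "Rel X' (cmp g Q')" using RelI[OF q(2) e(3) frB] X'eq by simp
      have CY2: "cmp C' Y = cmp (cmp g f') l'" using CY ll e lr' by (simp add: assoc)
      show ?thesis
      proof (cases "C' \<in> L")
        case True
        have sqWe: "cmp (cmp C' C) Q = cmp (cmp g f') l'" using CY2 h o PQ by (simp add: assoc[symmetric])
        have sqW: "sq Q l' (cmp C' C) (cmp g f')"
          using e o h PQ lr' ll sqWe unfolding comm_square_def by auto
        from RPOs[OF _ q'(2) gf' sqW] PQ obtain e0 f0 g0 where W0: "rpo Q l' (cmp C' C) (cmp g f') e0 f0 g0"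
          unfolding is_term_def by blast
        have "ipo (cmp C Q) l' C' (cmp g f')" by (rule paste_ipo[OF q'(3) ipoR W0])
        then have "ipo_trans Arr dm cd cmp idt D R Y C' (cmp (cmp g f') r')"
          unfolding ipo_trans_def using gf' q'(2) h(5) by blast
        then show ?thesis using True RelY Y'eq by auto
      next
        case False
        have "reduces dm cd cmp D R (cmp C' Y) (cmp (cmp g f') r')"
          unfolding reduces_def
          by (rule exI[of _ l'], rule exI[of _ r'], rule exI[of _ "cmp g f'"]) (use gf' q'(2) CY2 ll e lr' in auto)
        then show ?thesis using False RelY Y'eq by auto
      qed
    qed
    have enL_case: "\<exists>Y'. (if C' \<in> L then ipo_trans Arr dm cd cmp idt D R Y C' Y'
                      else reduces dm cd cmp D R (cmp C' Y) Y') \<and> Rel X' Y'" if eL: "e \<notin> L"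
    proof -
      have C'L: "C' \<notin> L" using clo[OF ipoR] eL by blast
      from Bm[OF h(1) trP] eL obtain Q' where q: "reduces dm cd cmp D R (cmp e Q) Q'" "?B (cmp f r) Q'"
        by auto
      then obtain l' r' d' where q': "(l', r') \<in> R" "d' \<in> D" "cd l' = dm d'" "cmp e Q = cmp d' l'" "Q' = cmp d' r'"
        unfolding reduces_def by blast
      have lr': "l' \<in> Arr" "r' \<in> Arr" "dm l' = zero" "dm r' = zero" "cd l' = cd r'" using RR[OF q'(1)] by auto
      have d'A: "d' \<in> Arr" using q'(2) DA by blast
      have cdd': "cd d' = dm g"
      proof -
        have "cd (cmp e Q) = cd e" using e PQ h by simp
        moreover have "cd (cmp d' l') = cd d'" using d'A lr' q'(3) by simp
        ultimately show ?thesis using q'(4) e by simp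
      qed
      have gd': "cmp g d' \<in> D" using Dc[OF q'(2) fg(2) cdd'] .
      have CY2: "cmp C' Y = cmp (cmp g d') l'" using CY q'(3,4) cdd' d'A e lr' by (simp add: assoc)
      have "reduces dm cd cmp D R (cmp C' Y) (cmp (cmp g d') r')"
        unfolding reduces_def
        by (rule exI[of _ l'], rule exI[of _ r'], rule exI[of _ "cmp g d'"]) (use gd' q'(1) CY2 q'(3) d'A e cdd' lr' in auto)
      moreover have "Rel X' (cmp (cmp g d') r')"
        using RelI[OF q(2) e(3) frB] X'eq q'(5) d'A cdd' e lr' q'(3) by (simp add: assoc)
      ultimately show ?thesis using C'L by auto
    qed
    show "if C' \<in> L then (\<exists>Y'. ipo_trans Arr dm cd cmp idt D R Y C' Y' \<and> Rel X' Y')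
         else (\<exists>Y'. reduces dm cd cmp D R (cmp C' Y) Y' \<and> Rel X' Y')"
      using eL_case enL_case by (cases "e \<in> L") (auto split: if_splits)
  qed
  have RB: "L_bisimulation Arr dm cd cmp idt zero D R L Rel"
    unfolding L_bisimulation_def using r1 r2 r3 by blast
  show ?thesis
  proof (intro allI impI)
    fix P Q C assume "is_term Arr dm zero P" "is_term Arr dm zero Q" "cd Q = cd P" "C \<in> Arr" "dm C = cd P"
      and b: "?B P Q"
    then have "Rel (cmp C P) (cmp C Q)" using RelI by blast
    then show "?B (cmp C P) (cmp C Q)" using RB unfolding L_bisimilar_def by blast
  qed
qed

end
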